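(* Let $\mathcal H$ be a Hilbert space and $\mathcal S,\mathcal W,\mathcal A\subseteq\mathcal H$ closed subspaces such that $\mathcal S,\mathcal W,\mathcal A,\mathcal S^\perp,\mathcal W^\perp,\mathcal A^\perp$ are all nonzero and $\mathcal A\oplus\mathcal S^\perp=\mathcal H$; assume moreover $\sin(\mathcal A^\perp,\mathcal S)>0$. Fix $\lambda\in[0,1]$, let $B:=\lambda P_{\mathcal A\mathcal S^\perp}+(1-\lambda)P_{\mathcal S}$, $\mathcal B:=\mathcal R(B)$ (so that $B$ is the oblique projection onto $\mathcal B$ along $\mathcal S^\perp$), and $R_\lambda:=P_{\mathcal W}-P_{\mathcal W}B=P_{\mathcal W}P_{\mathcal S^\perp\mathcal B}$. Then for every $x\in\mathcal H$, $$\alpha_\lambda\|P_{\mathcal B^\perp}x\|\le\|R_\lambda x\|\le\beta_\lambda\|P_{\mathcal B^\perp}x\|,$$ where $$\alpha_\lambda=\Bigl(1+\lambda^2\frac{\cos^2(\mathcal A^\perp,\mathcal S)}{\sin^2(\mathcal A^\perp,\mathcal S)}\Bigr)^{1/2}\cos(\mathcal W^\perp,\mathcal S),\qquad \beta_\lambda=\Bigl(1+\lambda^2\frac{\sin^2(\mathcal A,\mathcal S)}{\cos^2(\mathcal A,\mathcal S)}\Bigr)^{1/2}\sin(\mathcal W,\mathcal S).$$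
   Context: $P_{\mathcal V}$ is the orthogonal projection onto a closed subspace $\mathcal V$, $\mathcal V^\perp$ its orthogonal complement, $\mathcal R(\cdot)$ the range. For closed subspaces with $\mathcal V_1\oplus\mathcal V_2=\mathcal H$ ($\mathcal V_1+\mathcal V_2=\mathcal H$, $\mathcal V_1\cap\mathcal V_2=\{0\}$), $P_{\mathcal V_1\mathcal V_2}$ is the oblique projection onto $\mathcal V_1$ along $\mathcal V_2$ (identity on $\mathcal V_1$, zero on $\mathcal V_2$). Angles between nonzero closed subspaces: $\cos(\mathcal V_1,\mathcal V_2):=\inf_{0\ne x\in\mathcal V_1}\|P_{\mathcal V_2}x\|/\|x\|$ and $\sin(\mathcal V_1,\mathcal V_2):=\sup_{0\ne x\in\mathcal V_1}\|P_{\mathcal V_2^\perp}x\|/\|x\|$. Under $\mathcal A\oplus\mathcal S^\perp=\mathcal H$ one has $\cos(\mathcal A,\mathcal S)>0$, and $B$ is a bounded idempotent with nullspace $\mathcal S^\perp$, so $\mathcal B\oplus\mathcal S^\perp=\mathcal H$ and $P_{\mathcal S^\perp\mathcal B}=I-B$. *)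

theory Defs
  imports "HOL-Analysis.Analysis"
begin

definition orth_proj :: "'a::real_inner set \<Rightarrow> 'a \<Rightarrow> 'a" where
  "orth_proj V x = (THE y. y \<in> V \<and> x - y \<in> orthogonal_comp V)"

text \<open>Oblique projection onto V1 along V2 (assuming V1 + V2 = H, V1 \<inter> V2 = 0).\<close>
definition obl_proj :: "'a::real_vector set \<Rightarrow> 'a set \<Rightarrow> 'a \<Rightarrow> 'a" where
  "obl_proj V1 V2 x = (THE y. y \<in> V1 \<and> x - y \<in> V2)"

definition direct_sum_UNIV :: "'a::real_vector set \<Rightarrow> 'a set \<Rightarrow> bool" where
  "direct_sum_UNIV V1 V2 \<longleftrightarrow>
     {v1 + v2 | v1 v2. v1 \<in> V1 \<and> v2 \<in> V2} = UNIV \<and> V1 \<inter> V2 = {0}"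

definition cos_sub :: "'a::real_inner set \<Rightarrow> 'a set \<Rightarrow> real" where
  "cos_sub V1 V2 = (INF x \<in> V1 - {0}. norm (orth_proj V2 x) / norm x)"

definition sin_sub :: "'a::real_inner set \<Rightarrow> 'a set \<Rightarrow> real" where
  "sin_sub V1 V2 = (SUP x \<in> V1 - {0}. norm (orth_proj (orthogonal_comp V2) x) / norm x)"

end

theory Submission
  imports Defs
begin

lemma parallelogram_norm:
  fixes u v :: "'a::real_inner"
  shows "norm (u + v)^2 + norm (u - v)^2 = 2 * norm u ^2 + 2 * norm v ^2"
  by (simp add: power2_norm_eq_inner inner_add_left inner_add_right inner_diff_left inner_diff_right inner_commute)

lemma proj_exists:
  fixes V :: "'a::{real_inner,complete_space} set"
  assumes V: "subspace V" "closed V"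
  shows "\<exists>y\<in>V. x - y \<in> orthogonal_comp V"
proof -
  define D where "D = (\<lambda>v. norm (x - v)) ` V"
  define d where "d = Inf D"
  have "0 \<in> V" using V subspace_0 by blast
  then have Dne: "D \<noteq> {}" unfolding D_def by auto
  have Dbdd: "bdd_below D" unfolding D_def by (rule bdd_belowI[of _ 0]) auto
  have dle: "d \<le> norm (x - v)" if "v \<in> V" for v
    unfolding d_def D_def using Dbdd D_def that by (auto intro: cInf_lower)
  have d0: "0 \<le> d" unfolding d_def using Dne by (auto intro!: cInf_greatest simp: D_def)
  have "\<exists>y\<in>V. norm (x - y) < d + 1 / (real n + 1)" for n :: nat
  proof -
    have "Inf D < d + 1 / (real n + 1)" unfolding d_def by (simp add: add_pos_pos)
    then obtain t where "t \<in> D" "t < d + 1 / (real n + 1)"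
      using cInf_lessD[OF Dne] by blast
    then show ?thesis unfolding D_def by auto
  qed
  then obtain y where yV: "\<And>n. y n \<in> V" and yd: "\<And>n. norm (x - y n) < d + 1 / (real n + 1)"
    by metis
  define e where "e = (\<lambda>n::nat. 1 / (real n + 1))"
  have e0: "0 < e n" for n unfolding e_def by simp
  have e1: "e n \<le> 1" for n unfolding e_def by simp
  have sq: "norm (x - y n)^2 \<le> d^2 + (2*d+1) * e n" for n
  proof -
    have "norm (x - y n)^2 \<le> (d + e n)^2"
      using yd[of n] by (intro power_mono) (auto simp: e_def)
    also have "\<dots> = d^2 + 2*d*e n + e n * e n" by (simp add: power2_eq_square algebra_simps)
    also have "\<dots> \<le> d^2 + 2*d*e n + e n" using e0[of n] e1[of n]
      by (simp add: mult_le_cancel_left1)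
    finally show ?thesis by (simp add: algebra_simps)
  qed
  have pair: "norm (y n - y m)^2 \<le> 2*(2*d+1)*(e n + e m)" for n m
  proof -
    have mid: "(1/2) *\<^sub>R (y n + y m) \<in> V" using V yV by (simp add: subspace_add subspace_scale)
    have "d \<le> norm (x - (1/2) *\<^sub>R (y n + y m))" using dle[OF mid] .
    then have "d^2 \<le> norm (x - (1/2) *\<^sub>R (y n + y m))^2" using d0 by (intro power_mono) auto
    moreover have "norm ((x - y n) + (x - y m))^2 + norm ((x - y n) - (x - y m))^2 =
       2 * norm (x - y n)^2 + 2 * norm (x - y m)^2" by (rule parallelogram_norm)
    moreover have "(x - y n) + (x - y m) = 2 *\<^sub>R (x - (1/2) *\<^sub>R (y n + y m))"
      by (simp add: algebra_simps scaleR_2)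
    moreover have "(x - y n) - (x - y m) = y m - y n" by simp
    moreover have "norm (y m - y n) = norm (y n - y m)" by (rule norm_minus_commute)
    ultimately have "4 * d^2 + norm (y n - y m)^2 \<le> 2 * norm (x - y n)^2 + 2 * norm (x - y m)^2"
      by (simp add: power_mult_distrib)
    then show ?thesis using sq[of n] sq[of m] by (simp add: algebra_simps)
  qed
  have "Cauchy y"
  proof (rule CauchyI)
    fix r :: real assume r: "0 < r"
    obtain N :: nat where N: "4*(2*d+1) / r^2 < real N" using reals_Archimedean2 by blast
    have "norm (y m - y n) < r" if "N \<le> m" "N \<le> n" for m n
    proof -
      have eN: "e k \<le> 1 / (real N + 1)" if "N \<le> k" for k
        unfolding e_def using that by (intro divide_left_mono) auto
      have "e m + e n \<le> 2 / (real N + 1)" using eN[OF that(1)] eN[OF that(2)] by simp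
      then have "2*(2*d+1)*(e m + e n) \<le> 2*(2*d+1)*(2 / (real N + 1))"
        by (rule mult_left_mono) (use d0 in simp)
      then have A: "norm (y m - y n)^2 \<le> 4*(2*d+1) / (real N + 1)"
        using pair[of m n] by (simp add: add.commute)
      have "4*(2*d+1) / r^2 < real N + 1" using N by simp
      then have "4*(2*d+1) < (real N + 1) * r^2" using r by (simp add: divide_less_eq)
      then have "4*(2*d+1) / (real N + 1) < r^2" by (simp add: divide_less_eq mult.commute)
      with A have "norm (y m - y n)^2 < r^2" by linarith
      then show ?thesis using r by (simp add: power2_less_imp_less less_imp_le)
    qed
    then show "\<exists>M. \<forall>m\<ge>M. \<forall>n\<ge>M. norm (y m - y n) < r" by blast
  qed
  then obtain z where yz: "y \<longlonglongrightarrow> z" using Cauchy_convergent convergent_def by blast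
  have zV: "z \<in> V" using closed_sequentially[OF V(2) yV yz] .
  have "(\<lambda>n. norm (x - y n)) \<longlonglongrightarrow> norm (x - z)" by (intro tendsto_intros yz)
  moreover have "(\<lambda>n. d + e n) \<longlonglongrightarrow> d + 0"
  proof (intro tendsto_intros)
    have "(\<lambda>n. inverse (real (Suc n))) \<longlonglongrightarrow> 0" by (rule LIMSEQ_inverse_real_of_nat)
    moreover have "(\<lambda>n. inverse (real (Suc n))) = e" unfolding e_def by (auto simp: inverse_eq_divide add.commute)
    ultimately show "e \<longlonglongrightarrow> 0" by simp
  qed
  ultimately have "norm (x - z) \<le> d" using yd unfolding e_def
    by (intro LIMSEQ_le[of _ _ "\<lambda>n. d + e n"]) (auto simp: e_def less_imp_le)
  then have zmin: "norm (x - z) \<le> norm (x - v)" if "v \<in> V" for v using dle[OF that] by linarith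
  have "x - z \<in> orthogonal_comp V"
    unfolding orthogonal_comp_def orthogonal_def
  proof (clarify)
    fix v assume vV: "v \<in> V"
    show "v \<bullet> (x - z) = 0"
    proof (cases "v = 0")
      case True then show ?thesis by simp
    next
      case False
      define k where "k = v \<bullet> (x - z)"
      define t where "t = k / (v \<bullet> v)"
      have vv: "0 < v \<bullet> v" using False by simp
      have "z + t *\<^sub>R v \<in> V" using V zV vV by (simp add: subspace_add subspace_scale)
      from zmin[OF this] have "norm (x - z)^2 \<le> norm ((x - z) - t *\<^sub>R v)^2"
        by (simp add: diff_diff_eq)
      then have "(x - z) \<bullet> (x - z) \<le> (x - z) \<bullet> (x - z) - 2 * t * k + t * t * (v \<bullet> v)"
        by (simp add: power2_norm_eq_inner inner_diff_left inner_diff_right k_def inner_commute algebra_simps)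
      then have X: "0 \<le> - 2 * t * k + t * t * (v \<bullet> v)" by simp
      have Y: "t * t * (v \<bullet> v) = t * k" unfolding t_def using vv by (simp add: field_simps)
      have "0 \<le> - t * k" using X unfolding Y by linarith
      then have "0 \<le> - (k * k) / (v \<bullet> v)" unfolding t_def by simp
      then have "k * k \<le> 0" using vv by (simp add: divide_nonneg_pos field_simps)
      then show ?thesis unfolding k_def by (simp add: mult_le_0_iff) linarith
    qed
  qed
  then show ?thesis using zV by blast
qed




context
  fixes V :: "'a::{real_inner,complete_space} set"
  assumes V: "subspace V" "closed V"
begin

lemma oc_orth: "u \<in> V \<Longrightarrow> w \<in> orthogonal_comp V \<Longrightarrow> u \<bullet> w = 0"
  by (auto simp: orthogonal_comp_def orthogonal_def)

lemma proj_unique: "y \<in> V \<Longrightarrow> x - y \<in> orthogonal_comp V \<Longrightarrow> orth_proj V x = y"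
  unfolding orth_proj_def
proof (rule the_equality)
  fix y' assume y: "y \<in> V" "x - y \<in> orthogonal_comp V" and y': "y' \<in> V \<and> x - y' \<in> orthogonal_comp V"
  have "y' - y \<in> V" using V y y' by (simp add: subspace_diff)
  moreover have "y' - y \<in> orthogonal_comp V"
  proof -
    have "(x - y) - (x - y') \<in> orthogonal_comp V"
      using y y' subspace_orthogonal_comp subspace_diff by blast
    then show ?thesis by simp
  qed
  ultimately have "y' - y = 0" using orthogonal_Int_0[OF V(1)] by blast
  then show "y' = y" by simp
qed auto

lemma proj_props: "orth_proj V x \<in> V \<and> x - orth_proj V x \<in> orthogonal_comp V"
proof -
  obtain y where "y \<in> V" "x - y \<in> orthogonal_comp V" using proj_exists[OF V] by blast
  then show ?thesis using proj_unique by simp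
qed

lemma proj_in: "orth_proj V x \<in> V" using proj_props by blast
lemma proj_perp: "x - orth_proj V x \<in> orthogonal_comp V" using proj_props by blast

lemma proj_id: "x \<in> V \<Longrightarrow> orth_proj V x = x"
  by (rule proj_unique) (auto simp: orthogonal_comp_def orthogonal_def)

lemma proj_zero: "x \<in> orthogonal_comp V \<Longrightarrow> orth_proj V x = 0"
  by (rule proj_unique) (auto simp: V subspace_0)

lemma proj_add: "orth_proj V (x + y) = orth_proj V x + orth_proj V y"
proof (rule proj_unique)
  show "orth_proj V x + orth_proj V y \<in> V" using V proj_in by (simp add: subspace_add)
  have "(x - orth_proj V x) + (y - orth_proj V y) \<in> orthogonal_comp V"
    using proj_perp subspace_orthogonal_comp subspace_add by blast
  then show "x + y - (orth_proj V x + orth_proj V y) \<in> orthogonal_comp V"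
    by (simp add: algebra_simps)
qed

lemma proj_scale: "orth_proj V (c *\<^sub>R x) = c *\<^sub>R orth_proj V x"
proof (rule proj_unique)
  show "c *\<^sub>R orth_proj V x \<in> V" using V proj_in by (simp add: subspace_scale)
  have "c *\<^sub>R (x - orth_proj V x) \<in> orthogonal_comp V"
    using proj_perp subspace_orthogonal_comp subspace_scale by blast
  then show "c *\<^sub>R x - c *\<^sub>R orth_proj V x \<in> orthogonal_comp V"
    by (simp add: algebra_simps)
qed

lemma proj_diff: "orth_proj V (x - y) = orth_proj V x - orth_proj V y"
  using proj_add[of x "-y"] proj_scale[of "-1" y] by simp

lemma proj_pyth: "norm x ^2 = norm (orth_proj V x)^2 + norm (x - orth_proj V x)^2"
proof -
  have o: "orth_proj V x \<bullet> (x - orth_proj V x) = 0" using oc_orth proj_in proj_perp by blast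
  have g: "p \<bullet> q = 0 \<Longrightarrow> norm (p + q)^2 = norm p^2 + norm q^2" for p q :: 'a
    by (simp add: power2_norm_eq_inner inner_add_left inner_add_right inner_commute)
  have "x = orth_proj V x + (x - orth_proj V x)" by simp
  then show ?thesis using g[OF o] by metis
qed

lemma proj_norm_le: "norm (orth_proj V x) \<le> norm x"
  using proj_pyth[of x] by (metis le_add_same_cancel1 norm_ge_zero power2_le_imp_le zero_le_power2)

lemma proj_bl: "bounded_linear (orth_proj V)"
  by (rule bounded_linear_intro[where K=1]) (auto simp: proj_add proj_scale proj_norm_le)

lemma proj_inner_self: "orth_proj V x \<bullet> x = norm (orth_proj V x)^2"
proof -
  have "orth_proj V x \<bullet> (x - orth_proj V x) = 0" using oc_orth proj_in proj_perp by blast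
  then show ?thesis by (simp add: inner_diff_right power2_norm_eq_inner)
qed

lemma oc_oc: "orthogonal_comp (orthogonal_comp V) = V"
proof
  show "V \<subseteq> orthogonal_comp (orthogonal_comp V)" by (rule orthogonal_comp_subset)
  show "orthogonal_comp (orthogonal_comp V) \<subseteq> V"
  proof
    fix x assume x: "x \<in> orthogonal_comp (orthogonal_comp V)"
    have "orth_proj V x \<in> orthogonal_comp (orthogonal_comp V)"
      using proj_in orthogonal_comp_subset by blast
    then have "x - orth_proj V x \<in> orthogonal_comp (orthogonal_comp V)"
      using x subspace_orthogonal_comp subspace_diff by blast
    then have "x - orth_proj V x = 0"
      using proj_perp orthogonal_Int_0[OF subspace_orthogonal_comp, of V] by blast
    then show "x \<in> V" using proj_in by (metis eq_iff_diff_eq_0)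
  qed
qed

end

lemma closed_oc: "closed (orthogonal_comp (U :: 'a::real_inner set))"
proof -
  have "orthogonal_comp U = (\<Inter>u\<in>U. {x. u \<bullet> x = 0})"
    by (auto simp: orthogonal_comp_def orthogonal_def)
  moreover have "closed {x. u \<bullet> x = 0}" for u :: 'a
    by (intro closed_Collect_eq continuous_intros)
  ultimately show ?thesis by auto
qed

lemma proj_oc:
  fixes V :: "'a::{real_inner,complete_space} set"
  assumes V: "subspace V" "closed V"
  shows "orth_proj (orthogonal_comp V) x = x - orth_proj V x"
proof (rule proj_unique)
  show "subspace (orthogonal_comp V)" "closed (orthogonal_comp V)"
    by (auto simp: subspace_orthogonal_comp closed_oc)
  show "x - orth_proj V x \<in> orthogonal_comp V" using proj_perp[OF V] .
  show "x - (x - orth_proj V x) \<in> orthogonal_comp (orthogonal_comp V)"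
    using proj_in[OF V] orthogonal_comp_subset by auto
qed




lemma nonzero_elem: "subspace V \<Longrightarrow> V \<noteq> {0} \<Longrightarrow> V - {0} \<noteq> {}"
  using subspace_0 by blast

lemma cos_le:
  fixes V2 :: "'a::{real_inner,complete_space} set"
  assumes "v \<in> V1" "v \<noteq> 0"
  shows "cos_sub V1 V2 \<le> norm (orth_proj V2 v) / norm v"
  unfolding cos_sub_def
  by (rule cINF_lower) (auto intro!: bdd_belowI2[where m=0] simp: assms)

lemma cos_nonneg: "V1 - {0} \<noteq> {} \<Longrightarrow> 0 \<le> cos_sub V1 V2"
  unfolding cos_sub_def by (rule cINF_greatest) auto

lemma cos_ge: "V1 - {0} \<noteq> {} \<Longrightarrow> (\<And>v. v \<in> V1 \<Longrightarrow> v \<noteq> 0 \<Longrightarrow> c \<le> norm (orth_proj V2 v) / norm v)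
   \<Longrightarrow> c \<le> cos_sub V1 V2"
  unfolding cos_sub_def by (rule cINF_greatest) auto

lemma sin_ge:
  fixes V2 :: "'a::{real_inner,complete_space} set"
  assumes "v \<in> V1" "v \<noteq> 0"
  shows "norm (orth_proj (orthogonal_comp V2) v) / norm v \<le> sin_sub V1 V2"
  unfolding sin_sub_def
proof (rule cSUP_upper)
  show "v \<in> V1 - {0}" using assms by auto
  have "norm (orth_proj (orthogonal_comp V2) x) / norm x \<le> 1" for x
  proof (cases "x = 0")
    case False
    have "norm (orth_proj (orthogonal_comp V2) x) \<le> norm x"
      by (rule proj_norm_le) (auto simp: subspace_orthogonal_comp closed_oc)
    then show ?thesis using False by simp
  qed simp
  then show "bdd_above ((\<lambda>x. norm (orth_proj (orthogonal_comp V2) x) / norm x) ` (V1 - {0}))"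
    by (intro bdd_aboveI2[where M=1]) auto
qed

lemma sin_nonneg:
  fixes V2 :: "'a::{real_inner,complete_space} set"
  assumes "V1 - {0} \<noteq> {}"
  shows "0 \<le> sin_sub V1 V2"
proof -
  obtain v where "v \<in> V1" "v \<noteq> 0" using assms by auto
  from sin_ge[OF this, of V2] show ?thesis by (meson divide_nonneg_nonneg norm_ge_zero order_trans)
qed

context
  fixes A T :: "'a::real_vector set"
  assumes ds: "direct_sum_UNIV A T" and sA: "subspace A" and sT: "subspace T"
begin

lemma obl_unique: "y \<in> A \<Longrightarrow> x - y \<in> T \<Longrightarrow> obl_proj A T x = y"
  unfolding obl_proj_def
proof (rule the_equality)
  fix y' assume y: "y \<in> A" "x - y \<in> T" and y': "y' \<in> A \<and> x - y' \<in> T"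
  have "y' - y \<in> A" using sA y y' by (simp add: subspace_diff)
  moreover have "(x - y) - (x - y') \<in> T" using sT y y' subspace_diff by blast
  ultimately have "y' - y \<in> A \<inter> T" by simp
  then have "y' - y = 0" using ds unfolding direct_sum_UNIV_def by blast
  then show "y' = y" by simp
qed auto

lemma obl_props: "obl_proj A T x \<in> A \<and> x - obl_proj A T x \<in> T"
proof -
  have "x \<in> {v1 + v2 | v1 v2. v1 \<in> A \<and> v2 \<in> T}" using ds unfolding direct_sum_UNIV_def by blast
  then obtain v1 v2 where "v1 \<in> A" "v2 \<in> T" "x = v1 + v2" by blast
  then have "v1 \<in> A" "x - v1 \<in> T" by auto
  then show ?thesis using obl_unique by simp
qed

lemma obl_in: "obl_proj A T x \<in> A" using obl_props by blast
lemma obl_perp: "x - obl_proj A T x \<in> T" using obl_props by blast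

lemma obl_add: "obl_proj A T (x + y) = obl_proj A T x + obl_proj A T y"
proof (rule obl_unique)
  show "obl_proj A T x + obl_proj A T y \<in> A" using sA obl_in by (simp add: subspace_add)
  have "(x - obl_proj A T x) + (y - obl_proj A T y) \<in> T"
    using obl_perp sT subspace_add by blast
  then show "x + y - (obl_proj A T x + obl_proj A T y) \<in> T" by (simp add: algebra_simps)
qed

lemma obl_scale: "obl_proj A T (c *\<^sub>R x) = c *\<^sub>R obl_proj A T x"
proof (rule obl_unique)
  show "c *\<^sub>R obl_proj A T x \<in> A" using sA obl_in by (simp add: subspace_scale)
  have "c *\<^sub>R (x - obl_proj A T x) \<in> T" using obl_perp sT subspace_scale by blast
  then show "c *\<^sub>R x - c *\<^sub>R obl_proj A T x \<in> T" by (simp add: algebra_simps)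
qed

lemma obl_diff: "obl_proj A T (x - y) = obl_proj A T x - obl_proj A T y"
  using obl_add[of x "-y"] obl_scale[of "-1" y] by simp

end




lemma baire_step:
  fixes F :: "nat \<Rightarrow> 'a::{real_normed_vector,complete_space} set"
  assumes "\<And>x. \<exists>n. x \<in> F n"
  shows "\<exists>n h0 r. 0 < r \<and> ball h0 r \<subseteq> closure (F n)"
proof (rule ccontr)
  assume H: "\<not> ?thesis"
  have "Met_TC.mtopology interior_of \<Union> (range (\<lambda>n. closure (F n))) = {}"
  proof (rule Met_TC.metric_Baire_category_alt)
    show "Met_TC.mcomplete TYPE('a)" using complete_UNIV by simp
    show "countable (range (\<lambda>n. closure (F n)))" by simp
    fix T assume "T \<in> range (\<lambda>n. closure (F n))"
    then obtain n where T: "T = closure (F n)" by blast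
    have "interior T = {}"
    proof (rule ccontr)
      assume "interior T \<noteq> {}"
      then obtain x where "x \<in> interior T" by blast
      then obtain e where "0 < e" "ball x e \<subseteq> T" using mem_interior by blast
      then show False using H T by blast
    qed
    then show "closedin Met_TC.mtopology T \<and> Met_TC.mtopology interior_of T = {}"
      using T by (simp add: euclidean_interior_of)
  qed
  moreover have "\<Union> (range (\<lambda>n. closure (F n))) = UNIV"
    using assms closure_subset by blast
  ultimately show False by (simp add: euclidean_interior_of)
qed

lemma geo_bound:
  fixes u :: "nat \<Rightarrow> 'a::real_normed_vector" and K :: real
  assumes "\<And>k. norm (u k) \<le> K * (1/2)^k"
  assumes "m \<le> n"
  shows "norm ((\<Sum>k<n. u k) - (\<Sum>k<m. u k)) \<le> 2 * K * ((1/2)^m - (1/2)^n)"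
  using assms(2)
proof (induction n rule: dec_induct)
  case base then show ?case by simp
next
  case (step n)
  have "norm ((\<Sum>k<Suc n. u k) - (\<Sum>k<m. u k)) = norm (((\<Sum>k<n. u k) - (\<Sum>k<m. u k)) + u n)"
    by (simp add: algebra_simps)
  also have "\<dots> \<le> norm ((\<Sum>k<n. u k) - (\<Sum>k<m. u k)) + norm (u n)" by (rule norm_triangle_ineq)
  also have "\<dots> \<le> 2 * K * ((1/2)^m - (1/2)^n) + K * (1/2)^n" using step.IH assms(1)[of n] by linarith
  also have "\<dots> = 2 * K * ((1/2)^m - (1/2)^Suc n)" by (simp add: algebra_simps)
  finally show ?case .
qed


lemma iterate_bound:
  fixes S A :: "'a::{real_inner,complete_space} set"
  assumes S: "subspace S" "closed S" and A: "subspace A" "closed A" and M: "0 \<le> M"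
  and approx: "\<And>s. s \<in> S \<Longrightarrow> \<exists>a\<in>A. norm a \<le> M * norm s \<and> norm (s - orth_proj S a) \<le> norm s / 2"
  and s0: "s0 \<in> S"
  shows "\<exists>a\<in>A. orth_proj S a = s0 \<and> norm a \<le> 2 * M * norm s0"
proof -
  define P where "P = orth_proj S"
  have "\<forall>s\<in>S. \<exists>a. a \<in> A \<and> norm a \<le> M * norm s \<and> norm (s - P a) \<le> norm s / 2"
    using approx unfolding P_def by blast
  from bchoice[OF this] obtain g where g: "\<And>s. s \<in> S \<Longrightarrow> g s \<in> A \<and> norm (g s) \<le> M * norm s \<and> norm (s - P (g s)) \<le> norm s / 2"
    by blast
  have P0: "P 0 = 0" unfolding P_def using proj_scale[OF S, of 0 0] by simp
  define sq where "sq = (\<lambda>n. ((\<lambda>s. s - P (g s)) ^^ n) s0)"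
  have sq0: "sq 0 = s0" and sqS: "sq (Suc n) = sq n - P (g (sq n))" for n
    by (simp_all add: sq_def)
  have sqin: "sq n \<in> S" for n
  proof (induction n)
    case 0 then show ?case using s0 sq0 by simp
  next
    case (Suc n) then show ?case unfolding sqS P_def using proj_in[OF S] S(1) subspace_diff by blast
  qed
  have sqn: "norm (sq n) \<le> norm s0 * (1/2)^n" for n
  proof (induction n)
    case 0 then show ?case by (simp add: sq0)
  next
    case (Suc n) then show ?case using g[OF sqin[of n]] unfolding sqS by simp
  qed
  define u where "u = (\<lambda>k. g (sq k))"
  define ps where "ps = (\<lambda>n. \<Sum>k<n. u k)"
  have uA: "u k \<in> A" for k using g sqin unfolding u_def by blast
  have un: "norm (u k) \<le> (M * norm s0) * (1/2)^k" for k
  proof -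
    have "norm (u k) \<le> M * norm (sq k)" using g sqin unfolding u_def by blast
    also have "\<dots> \<le> M * (norm s0 * (1/2)^k)" using sqn M by (rule mult_left_mono)
    finally show ?thesis by simp
  qed
  have psA: "ps n \<in> A" for n unfolding ps_def by (rule subspace_sum[OF A(1)]) (rule uA)
  have Pps: "P (ps n) = s0 - sq n" for n
  proof (induction n)
    case 0 then show ?case by (simp add: ps_def sq0 P0)
  next
    case (Suc n)
    have "P (ps (Suc n)) = P (ps n) + P (u n)" unfolding ps_def P_def by (simp add: proj_add[OF S])
    then show ?case using Suc unfolding sqS u_def by simp
  qed
  have gb: "norm (ps n - ps m) \<le> 2 * (M * norm s0) * ((1/2)^m - (1/2)^n)" if "m \<le> n" for m n
  proof -
    have "norm ((\<Sum>k<n. u k) - (\<Sum>k<m. u k)) \<le> 2 * (M * norm s0) * ((1/2)^m - (1/2)^n)"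
      by (rule geo_bound[of u "M * norm s0" m n]) (fact un, fact that)
    then show ?thesis by (simp only: ps_def)
  qed
  have gb2: "norm (ps n - ps m) \<le> 2 * (M * norm s0) * (1/2)^m" if "m \<le> n" for m n
  proof -
    have "0 \<le> 2 * (M * norm s0) * (1/2)^n" using M by simp
    moreover have "2 * (M * norm s0) * ((1/2)^m - (1/2)^n) = 2 * (M * norm s0) * (1/2)^m - 2 * (M * norm s0) * (1/2)^n"
      by (rule right_diff_distrib)
    ultimately show ?thesis using gb[OF that] by linarith
  qed
  have "Cauchy ps"
  proof (rule CauchyI)
    fix e :: real assume e: "0 < e"
    have "0 < e / (2 * (M * norm s0) + 1)" using e M by (simp add: add_nonneg_pos)
    then obtain N where N: "(1/2::real)^N < e / (2 * (M * norm s0) + 1)"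
      using real_arch_pow_inv[of "e / (2 * (M * norm s0) + 1)" "1/2"] by auto
    have K0: "0 \<le> 2 * (M * norm s0)" using M by simp
    have key: "2 * (M * norm s0) * (1/2)^k < e" if "N \<le> k" for k
    proof -
      have "(1/2::real)^k \<le> (1/2)^N" using that by (simp add: power_decreasing)
      then have "(1/2::real)^k < e / (2 * (M * norm s0) + 1)" using N by linarith
      then have "(2 * (M * norm s0) + 1) * (1/2)^k < e" using K0 by (simp add: pos_less_divide_eq mult.commute)
      moreover have "2 * (M * norm s0) * (1/2::real)^k \<le> (2 * (M * norm s0) + 1) * (1/2)^k"
        by (simp add: algebra_simps)
      ultimately show ?thesis by linarith
    qed
    have "norm (ps m - ps n) < e" if "N \<le> m" "N \<le> n" for m n
    proof (cases "m \<le> n")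
      case True
      then have "norm (ps n - ps m) < e" using gb2[OF True] key[OF that(1)] by linarith
      then show ?thesis by (simp add: norm_minus_commute)
    next
      case False
      then show ?thesis using gb2[of n m] key[OF that(2)] by linarith
    qed
    then show "\<exists>N. \<forall>m\<ge>N. \<forall>n\<ge>N. norm (ps m - ps n) < e" by blast
  qed
  then obtain a where psa: "ps \<longlonglongrightarrow> a" using Cauchy_convergent convergent_def by blast
  have aA: "a \<in> A" using closed_sequentially[OF A(2) psA psa] .
  have "norm (ps n) \<le> 2 * M * norm s0" for n
  proof -
    have "norm (ps n - ps 0) \<le> 2 * (M * norm s0) * (1/2)^0" by (rule gb2) simp
    then show ?thesis by (simp add: ps_def)
  qed
  moreover have "(\<lambda>n. norm (ps n)) \<longlonglongrightarrow> norm a" using psa by (rule tendsto_norm)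
  ultimately have na: "norm a \<le> 2 * M * norm s0" by (simp add: LIMSEQ_le_const2)
  have "(\<lambda>n. P (ps n)) \<longlonglongrightarrow> P a"
    unfolding P_def using bounded_linear.tendsto[OF proj_bl[OF S] psa] .
  moreover have "(\<lambda>n. P (ps n)) \<longlonglongrightarrow> s0"
  proof -
    have "(\<lambda>n. norm s0 * (1/2::real)^n) \<longlonglongrightarrow> norm s0 * 0"
      by (intro tendsto_intros) simp
    then have g0: "(\<lambda>n. norm s0 * (1/2::real)^n) \<longlonglongrightarrow> 0" by simp
    have "sq \<longlonglongrightarrow> 0"
      by (rule Lim_null_comparison[OF _ g0]) (use sqn in simp)
    then have "(\<lambda>n. s0 - sq n) \<longlonglongrightarrow> s0 - 0" by (intro tendsto_intros)
    then show ?thesis unfolding Pps by simp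
  qed
  ultimately have "P a = s0" using LIMSEQ_unique by blast
  then show ?thesis using aA na unfolding P_def by blast
qed




lemma direct_sum_bound:
  fixes S A :: "'a::{real_inner,complete_space} set"
  assumes S: "subspace S" "closed S" and A: "subspace A" "closed A"
    and ds: "direct_sum_UNIV A (orthogonal_comp S)"
  shows "\<exists>C>0. \<forall>a\<in>A. norm a \<le> C * norm (orth_proj S a)"
proof -
  define P where "P = orth_proj S"
  define Q where "Q = obl_proj A (orthogonal_comp S)"
  have sT: "subspace (orthogonal_comp S)" by (rule subspace_orthogonal_comp)
  have QA: "Q h \<in> A" for h unfolding Q_def by (rule obl_in[OF ds A(1) sT])
  have Qp: "h - Q h \<in> orthogonal_comp S" for h unfolding Q_def by (rule obl_perp[OF ds A(1) sT])
  have PQ: "P (Q h) = P h" for h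
  proof -
    have "P (h - Q h) = 0" unfolding P_def using proj_zero[OF S Qp] .
    then show ?thesis unfolding P_def proj_diff[OF S] by simp
  qed
  have Plin: "P (x + y) = P x + P y" "P (c *\<^sub>R x) = c *\<^sub>R P x" "P (x - y) = P x - P y" for x y c
    unfolding P_def by (simp_all add: proj_add[OF S] proj_scale[OF S] proj_diff[OF S])
  have Pnorm: "norm (P x) \<le> norm x" for x unfolding P_def by (rule proj_norm_le[OF S])
  define F where "F = (\<lambda>n::nat. {h. \<exists>a\<in>A. norm a \<le> real n \<and> P h = P a})"
  have cover: "\<exists>n. h \<in> F n" for h
  proof -
    obtain n :: nat where n: "norm (Q h) \<le> real n" using real_arch_simple by blast
    have "h \<in> F n" unfolding F_def using QA[of h] PQ[of h] n by (intro CollectI bexI[of _ "Q h"]) auto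
    then show ?thesis by blast
  qed
  obtain n h0 r where r: "0 < r" "ball h0 r \<subseteq> closure (F n)"
    using baire_step[OF cover] by blast
  have approx1: "\<exists>a\<in>A. norm a \<le> real n \<and> norm (P x - P a) < e" if x: "norm x < r" and e: "0 < e" for x e
  proof -
    have "h0 + x \<in> closure (F n)" "h0 - x \<in> closure (F n)"
      using r x by (auto simp: dist_norm subset_iff)
    then obtain f1 f2 where f: "f1 \<in> F n" "dist f1 (h0 + x) < e" "f2 \<in> F n" "dist f2 (h0 - x) < e"
      using e unfolding closure_approachable by meson
    obtain a1 a2 where a: "a1 \<in> A" "norm a1 \<le> real n" "P f1 = P a1" "a2 \<in> A" "norm a2 \<le> real n" "P f2 = P a2"
      using f unfolding F_def by blast
    define a where "a = (1/2) *\<^sub>R (a1 - a2)"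
    have aA: "a \<in> A" unfolding a_def using A(1) a by (simp add: subspace_diff subspace_scale)
    have "norm a \<le> (norm a1 + norm a2) / 2" unfolding a_def
      using norm_triangle_ineq4[of a1 a2] by simp
    then have na: "norm a \<le> real n" using a by simp
    have e1: "P x - P a = P (x - (1/2) *\<^sub>R (f1 - f2))" using a unfolding a_def by (simp add: Plin)
    define U where "U = (h0 + x) - f1"
    define V where "V = (h0 - x) - f2"
    have e2: "x - (1/2) *\<^sub>R (f1 - f2) = (1/2) *\<^sub>R (U - V)"
      unfolding U_def V_def by (simp add: algebra_simps scaleR_2[symmetric] del: scaleR_2)
    have "norm (P x - P a) \<le> norm (x - (1/2) *\<^sub>R (f1 - f2))" unfolding e1 by (rule Pnorm)
    also have "\<dots> = norm ((1/2) *\<^sub>R (U - V))" unfolding e2 ..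
    also have "\<dots> = (1/2) * norm (U - V)" by simp
    also have "\<dots> \<le> (1/2) * (norm U + norm V)"
      using norm_triangle_ineq4[of U V] by simp
    also have "\<dots> < e" using f unfolding U_def V_def by (simp add: dist_norm norm_minus_commute)
    finally show ?thesis using aA na by blast
  qed
  define M where "M = 2 * real n / r"
  have M0: "0 \<le> M" unfolding M_def using r by simp
  have approx2: "\<exists>a\<in>A. norm a \<le> M * norm s \<and> norm (s - orth_proj S a) \<le> norm s / 2" if s: "s \<in> S" for s
  proof (cases "s = 0")
    case True then show ?thesis using A(1) subspace_0 by (auto simp: proj_zero[OF S] subspace_0[OF sT])
  next
    case False
    define c where "c = norm s"
    have c0: "0 < c" using False unfolding c_def by simp
    define x where "x = (r / (2 * c)) *\<^sub>R s"
    have nx: "norm x < r" unfolding x_def using c0 r by (simp add: c_def[symmetric])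
    obtain a' where a': "a' \<in> A" "norm a' \<le> real n" "norm (P x - P a') < r / 4"
      using approx1[OF nx, of "r/4"] r by auto
    define a where "a = (2 * c / r) *\<^sub>R a'"
    have aA: "a \<in> A" unfolding a_def using A(1) a' by (simp add: subspace_scale)
    have "norm a = (2 * c / r) * norm a'" unfolding a_def using c0 r by simp
    also have "\<dots> \<le> (2 * c / r) * real n" using a' c0 r by (intro mult_left_mono) auto
    also have "\<dots> = M * norm s" unfolding M_def c_def by simp
    finally have na: "norm a \<le> M * norm s" .
    have xS: "x \<in> S" unfolding x_def using S(1) s by (simp add: subspace_scale)
    have Px: "P x = x" unfolding P_def using proj_id[OF S xS] .
    have sx: "s = (2 * c / r) *\<^sub>R x" unfolding x_def using c0 r by simp
    have "s - P a = (2 * c / r) *\<^sub>R (P x - P a')" unfolding a_def Plin Px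
      by (subst sx) (simp add: algebra_simps)
    then have "norm (s - P a) = (2 * c / r) * norm (P x - P a')" using c0 r by simp
    also have "\<dots> \<le> (2 * c / r) * (r / 4)" using a' c0 r by (intro mult_left_mono) auto
    also have "\<dots> = norm s / 2" unfolding c_def using r by simp
    finally show ?thesis using aA na unfolding P_def by blast
  qed
  have inv: "\<exists>a\<in>A. orth_proj S a = s \<and> norm a \<le> 2 * M * norm s" if "s \<in> S" for s
    by (rule iterate_bound[OF S A M0 approx2 that])
  have "norm a \<le> (2 * M + 1) * norm (orth_proj S a)" if aA: "a \<in> A" for a
  proof -
    have "orth_proj S a \<in> S" by (rule proj_in[OF S])
    from inv[OF this] obtain a' where a': "a' \<in> A" "orth_proj S a' = orth_proj S a"
      "norm a' \<le> 2 * M * norm (orth_proj S a)" by blast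
    have "a - a' \<in> A" using A(1) aA a' by (simp add: subspace_diff)
    moreover have "a - a' \<in> orthogonal_comp S"
    proof -
      have "(a - a') - orth_proj S (a - a') \<in> orthogonal_comp S" by (rule proj_perp[OF S])
      then show ?thesis using a' by (simp add: proj_diff[OF S])
    qed
    ultimately have "a - a' = 0" using ds unfolding direct_sum_UNIV_def by blast
    then have "norm a \<le> 2 * M * norm (orth_proj S a)" using a' by simp
    moreover have "0 \<le> norm (orth_proj S a)" by simp
    moreover have "(2 * M + 1) * norm (orth_proj S a) = 2 * M * norm (orth_proj S a) + norm (orth_proj S a)"
      by (simp add: algebra_simps)
    ultimately show ?thesis by linarith
  qed
  moreover have "0 < 2 * M + 1" using M0 by simp
  ultimately show ?thesis by blast
qed



lemma alg_lower:
  fixes a p q m :: real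
  assumes "0 \<le> a" "0 \<le> p" "0 \<le> q" "0 \<le> m" "m*p \<le> a" "a^2 \<le> p*q"
  shows "m^2*(a^2+p^2) \<le> a^2 + q^2"
proof (cases "p = 0")
  case True
  then have "a^2 \<le> 0" using assms by simp
  then show ?thesis using True by simp
next
  case False
  then have p: "0 < p" using assms by simp
  have h1: "a^2 * a^2 \<le> (p*q) * (p*q)"
    using assms by (intro mult_mono) auto
  have h2: "(m*p)^2 \<le> a^2" using assms by (intro power_mono) auto
  have h3: "0 \<le> (a^2 - (m*p)^2)*(a^2+p^2)" using h2 by (intro mult_nonneg_nonneg) auto
  have "p^2 * (m^2*(a^2+p^2)) \<le> p^2 * (a^2 + q^2)"
    using h1 h3 by (simp add: power2_eq_square algebra_simps)
  then show ?thesis using p by (simp add: mult_le_cancel_left)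
qed

lemma alg_upper:
  fixes a p q k :: real
  assumes "0 \<le> a" "0 \<le> p" "0 \<le> q" "0 \<le> k" "q \<le> k*a" "a^2 \<le> p*q"
  shows "a^2 + q^2 \<le> k^2*(a^2+p^2)"
proof -
  have ak: "a \<le> k*p"
  proof (cases "a = 0")
    case True then show ?thesis using assms by simp
  next
    case False
    then have a0: "0 < a" using assms by simp
    have "a * a \<le> p * (k * a)" using assms mult_left_mono[of q "k*a" p] by (simp add: power2_eq_square)
    then have "a * a \<le> (k * p) * a" by (simp add: algebra_simps)
    then show ?thesis using a0 by (simp add: mult_le_cancel_right)
  qed
  have "q^2 \<le> (k*a)^2" using assms by (intro power_mono) auto
  moreover have "a^2 \<le> (k*p)^2" using ak assms by (intro power_mono) auto
  ultimately show ?thesis by (simp add: power_mult_distrib algebra_simps)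
qed

lemma sq_le_prod_imp:
  fixes w z s :: real
  assumes "0 \<le> w" "0 \<le> z" "0 \<le> s" "w^2 \<le> s * w * z"
  shows "w \<le> s * z"
proof (cases "w = 0")
  case True then show ?thesis using assms by simp
next
  case False
  then have "0 < w" using assms by simp
  moreover have "w * w \<le> (s * z) * w" using assms by (simp add: power2_eq_square algebra_simps)
  ultimately show ?thesis by (simp add: mult_le_cancel_right)
qed


lemma perp_inner_trick:
  fixes S :: "'a::{real_inner,complete_space} set"
  assumes S: "subspace S" "closed S" and z: "z \<in> orthogonal_comp S"
  shows "w \<bullet> z = orth_proj (orthogonal_comp S) w \<bullet> z"
proof -
  have "orth_proj S w \<bullet> z = 0" using oc_orth[OF S proj_in[OF S] z] .
  then show ?thesis unfolding proj_oc[OF S] by (simp add: inner_diff_left)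
qed

lemma W_upper:
  fixes S W :: "'a::{real_inner,complete_space} set"
  assumes S: "subspace S" "closed S" and W: "subspace W" "closed W" "W \<noteq> {0}"
    and z: "z \<in> orthogonal_comp S"
  shows "norm (orth_proj W z) \<le> sin_sub W S * norm z"
proof -
  define w where "w = orth_proj W z"
  define Pp where "Pp = orth_proj (orthogonal_comp S)"
  have s0: "0 \<le> sin_sub W S" by (rule sin_nonneg) (rule nonzero_elem[OF W(1) W(3)])
  have i1: "w \<bullet> z = norm w ^2" unfolding w_def by (rule proj_inner_self[OF W(1,2)])
  have i2: "w \<bullet> z = Pp w \<bullet> z" unfolding Pp_def by (rule perp_inner_trick[OF S z])
  have i3: "Pp w \<bullet> z \<le> norm (Pp w) * norm z" by (rule norm_cauchy_schwarz)
  have i4: "norm (Pp w) \<le> sin_sub W S * norm w"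
  proof (cases "w = 0")
    case True
    then show ?thesis unfolding Pp_def proj_oc[OF S] by (simp add: proj_zero[OF S] subspace_0 subspace_orthogonal_comp)
  next
    case False
    have wW: "w \<in> W" unfolding w_def by (rule proj_in[OF W(1,2)])
    have "norm (Pp w) / norm w \<le> sin_sub W S" unfolding Pp_def by (rule sin_ge[OF wW False])
    then show ?thesis using False by (simp add: divide_le_eq mult.commute)
  qed
  have "norm w ^2 \<le> sin_sub W S * norm w * norm z"
    using i1 i2 i3 i4 mult_right_mono[OF i4 norm_ge_zero[of z]] by linarith
  then show ?thesis unfolding w_def[symmetric] by (rule sq_le_prod_imp[OF norm_ge_zero norm_ge_zero s0])
qed

lemma W_lower:
  fixes S W :: "'a::{real_inner,complete_space} set"
  assumes S: "subspace S" "closed S" and W: "subspace W" "closed W" "orthogonal_comp W \<noteq> {0}"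
    and z: "z \<in> orthogonal_comp S"
  shows "cos_sub (orthogonal_comp W) S * norm z \<le> norm (orth_proj W z)"
proof -
  define c where "c = cos_sub (orthogonal_comp W) S"
  define Pp where "Pp = orth_proj (orthogonal_comp S)"
  define w where "w = z - orth_proj W z"
  have sWp: "subspace (orthogonal_comp W)" by (rule subspace_orthogonal_comp)
  have ne: "orthogonal_comp W - {0} \<noteq> {}" by (rule nonzero_elem[OF sWp W(3)])
  have c0: "0 \<le> c" unfolding c_def by (rule cos_nonneg[OF ne])
  have c1: "c \<le> 1"
  proof -
    obtain v where v: "v \<in> orthogonal_comp W" "v \<noteq> 0" using ne by blast
    have "c \<le> norm (orth_proj S v) / norm v" unfolding c_def by (rule cos_le[OF v])
    also have "\<dots> \<le> 1" using proj_norm_le[OF S, of v] v by simp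
    finally show ?thesis .
  qed
  have wW: "w \<in> orthogonal_comp W" unfolding w_def by (rule proj_perp[OF W(1,2)])
  have pyW: "norm z ^2 = norm (orth_proj W z)^2 + norm w ^2" unfolding w_def by (rule proj_pyth[OF W(1,2)])
  have i1: "w \<bullet> z = norm w ^2"
    using proj_inner_self[OF W(1,2), of z] pyW unfolding w_def
    by (simp add: inner_diff_left power2_norm_eq_inner)
  have i2: "w \<bullet> z = Pp w \<bullet> z" unfolding Pp_def by (rule perp_inner_trick[OF S z])
  have i3: "Pp w \<bullet> z \<le> norm (Pp w) * norm z" by (rule norm_cauchy_schwarz)
  have pyS: "norm w ^2 = norm (orth_proj S w)^2 + norm (Pp w)^2"
    unfolding Pp_def proj_oc[OF S] by (rule proj_pyth[OF S])
  have cw: "c * norm w \<le> norm (orth_proj S w)"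
  proof (cases "w = 0")
    case True then show ?thesis by simp
  next
    case False
    have "c \<le> norm (orth_proj S w) / norm w" unfolding c_def by (rule cos_le[OF wW False])
    then show ?thesis using False by (simp add: le_divide_eq)
  qed
  have "(c * norm w)^2 \<le> norm (orth_proj S w)^2" using cw c0 by (intro power_mono) auto
  then have pp: "norm (Pp w)^2 \<le> (1 - c^2) * norm w^2" using pyS by (simp add: power_mult_distrib algebra_simps)
  have "norm w ^2 \<le> norm (Pp w) * norm z" using i1 i2 i3 by linarith
  then have "(norm w ^2)^2 \<le> (norm (Pp w) * norm z)^2" by (intro power_mono) auto
  also have "\<dots> = norm (Pp w)^2 * norm z^2" by (simp add: power_mult_distrib)
  also have "\<dots> \<le> ((1 - c^2) * norm w^2) * norm z^2" by (rule mult_right_mono[OF pp]) simp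
  finally have "(norm w ^2)^2 \<le> (1 - c^2) * norm w^2 * norm z^2" .
  then have "norm w ^2 \<le> (1 - c^2) * norm z^2"
    by (rule sq_le_prod_imp[rotated 3]) (use c0 c1 in \<open>auto simp: power_le_one\<close>)
  then have "(c * norm z)^2 \<le> norm (orth_proj W z)^2" using pyW by (simp add: power_mult_distrib algebra_simps)
  then have "c * norm z \<le> norm (orth_proj W z)" by (rule power2_le_imp_le) simp
  then show ?thesis unfolding c_def .
qed




lemma pyth2: "(p::'a::real_inner) \<bullet> q = 0 \<Longrightarrow> norm (p + q)^2 = norm p^2 + norm q^2"
  by (simp add: power2_norm_eq_inner inner_add_left inner_add_right inner_commute)

theorem theorem2:
  fixes S W A :: "'a::{real_inner, complete_space} set" and lam :: real
  assumes "subspace S" "closed S" "subspace W" "closed W" "subspace A" "closed A"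
    and "S \<noteq> {0}" "W \<noteq> {0}" "A \<noteq> {0}"
    and "orthogonal_comp S \<noteq> {0}" "orthogonal_comp W \<noteq> {0}" "orthogonal_comp A \<noteq> {0}"
    and "direct_sum_UNIV A (orthogonal_comp S)"
    and "sin_sub (orthogonal_comp A) S > 0"
    and "0 \<le> lam" "lam \<le> 1"
  defines "B \<equiv> (\<lambda>x. lam *\<^sub>R obl_proj A (orthogonal_comp S) x + (1 - lam) *\<^sub>R orth_proj S x)"
  defines "BB \<equiv> range B"
  defines "R \<equiv> (\<lambda>x. orth_proj W x - orth_proj W (B x))"
  defines "\<alpha> \<equiv> sqrt (1 + lam\<^sup>2 * (cos_sub (orthogonal_comp A) S)\<^sup>2 / (sin_sub (orthogonal_comp A) S)\<^sup>2)
                  * cos_sub (orthogonal_comp W) S"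
  defines "\<beta> \<equiv> sqrt (1 + lam\<^sup>2 * (sin_sub A S)\<^sup>2 / (cos_sub A S)\<^sup>2) * sin_sub W S"
  shows "\<forall>x. \<alpha> * norm (orth_proj (orthogonal_comp BB) x) \<le> norm (R x)
           \<and> norm (R x) \<le> \<beta> * norm (orth_proj (orthogonal_comp BB) x)"
proof -
  have S: "subspace S" "closed S" and W: "subspace W" "closed W" and A: "subspace A" "closed A"
    using assms(1-6) by auto
  have Wne: "W \<noteq> {0}" and Wpne: "orthogonal_comp W \<noteq> {0}" and Apne: "orthogonal_comp A \<noteq> {0}"
    and Ane: "A \<noteq> {0}" using assms(8,9,11,12) by auto
  have ds: "direct_sum_UNIV A (orthogonal_comp S)" using assms(13) .
  have sig0: "sin_sub (orthogonal_comp A) S > 0" using assms(14) .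
  have lam: "0 \<le> lam" "lam \<le> 1" using assms(15,16) by auto
  define T where "T = orthogonal_comp S"
  define P where "P = orth_proj S"
  define Q where "Q = obl_proj A T"
  have sT: "subspace T" and cT: "closed T" unfolding T_def by (auto simp: subspace_orthogonal_comp closed_oc)
  have Bdef: "B u = lam *\<^sub>R Q u + (1 - lam) *\<^sub>R P u" for u unfolding B_def Q_def P_def T_def by simp
  obtain C where C: "C > 0" "\<And>a. a \<in> A \<Longrightarrow> norm a \<le> C * norm (P a)"
    using direct_sum_bound[OF S A ds] unfolding P_def by blast
  have ds': "direct_sum_UNIV A T" using ds unfolding T_def .
  have QA: "Q h \<in> A" for h unfolding Q_def by (rule obl_in[OF ds' A(1) sT])
  have Qp: "h - Q h \<in> T" for h unfolding Q_def by (rule obl_perp[OF ds' A(1) sT])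
  have Qu: "y \<in> A \<Longrightarrow> h - y \<in> T \<Longrightarrow> Q h = y" for h y unfolding Q_def by (rule obl_unique[OF ds' A(1) sT])
  have PS: "P h \<in> S" for h unfolding P_def by (rule proj_in[OF S])
  have Pp: "h - P h \<in> T" for h unfolding P_def T_def by (rule proj_perp[OF S])
  have Plin: "P (x + y) = P x + P y" "P (c *\<^sub>R x) = c *\<^sub>R P x" "P (x - y) = P x - P y" for x y c
    unfolding P_def by (simp_all add: proj_add[OF S] proj_scale[OF S] proj_diff[OF S])
  have Qlin: "Q (x + y) = Q x + Q y" "Q (c *\<^sub>R x) = c *\<^sub>R Q x" "Q (x - y) = Q x - Q y" for x y c
    unfolding Q_def by (simp_all add: obl_add[OF ds' A(1) sT] obl_scale[OF ds' A(1) sT] obl_diff[OF ds' A(1) sT])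
  have PT: "h \<in> T \<Longrightarrow> P h = 0" for h unfolding P_def T_def by (rule proj_zero[OF S])
  have PSid: "h \<in> S \<Longrightarrow> P h = h" for h unfolding P_def by (rule proj_id[OF S])
  have Tchar: "P h = 0 \<Longrightarrow> h \<in> T" for h using Pp[of h] by simp
  have PQ: "P (Q h) = P h" for h
  proof -
    have "P (h - Q h) = 0" by (rule PT[OF Qp])
    then show ?thesis unfolding Plin by simp
  qed
  have QQ: "a \<in> A \<Longrightarrow> Q a = a" for a by (rule Qu) (auto simp: sT subspace_0)
  have QP: "Q (P h) = Q h" for h
  proof (rule Qu[OF QA])
    have "(h - Q h) - (h - P h) \<in> T" using Qp Pp sT subspace_diff by blast
    then show "P h - Q h \<in> T" by simp
  qed
  have PP: "P (P h) = P h" for h by (rule PSid[OF PS])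
  have PB: "P (B u) = P u" for u unfolding Bdef Plin PQ PP by (simp add: algebra_simps)
  have QB: "Q (B u) = Q u" for u unfolding Bdef Qlin QQ[OF QA] QP by (simp add: algebra_simps)
  have BBu: "B (B u) = B u" for u using PB QB unfolding Bdef[of "B u"] by (simp add: Bdef)
  have Blin: "B (x + y) = B x + B y" "B (c *\<^sub>R x) = c *\<^sub>R B x" for x y c
    unfolding Bdef Plin Qlin by (simp_all add: algebra_simps)
  have Bnorm: "norm (B u) \<le> norm u * (C + 1)" for u
  proof -
    have "norm (Q u) \<le> C * norm (P u)" using C(2)[OF QA[of u]] unfolding PQ .
    also have "\<dots> \<le> C * norm u" using C(1) by (intro mult_left_mono) (auto simp: P_def proj_norm_le[OF S])
    finally have nQ: "norm (Q u) \<le> C * norm u" .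
    have nP: "norm (P u) \<le> norm u" unfolding P_def by (rule proj_norm_le[OF S])
    have "norm (B u) \<le> norm (lam *\<^sub>R Q u) + norm ((1 - lam) *\<^sub>R P u)" unfolding Bdef by (rule norm_triangle_ineq)
    also have "\<dots> = lam * norm (Q u) + (1 - lam) * norm (P u)" using lam by simp
    also have "\<dots> \<le> 1 * norm (Q u) + 1 * norm (P u)"
      using lam by (intro add_mono mult_right_mono) auto
    also have "\<dots> \<le> C * norm u + norm u" using nQ nP by simp
    finally show ?thesis by (simp add: algebra_simps)
  qed
  have blB: "bounded_linear B" by (rule bounded_linear_intro[OF _ _ Bnorm]) (simp_all add: Blin)
  have BBsub: "subspace BB" unfolding BB_def
    using linear_subspace_image[OF bounded_linear.linear[OF blB] subspace_UNIV] by simp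
  have BBcl: "closed BB" unfolding closed_sequential_limits
  proof (intro allI impI, elim conjE)
    fix xs l assume xs: "\<forall>n. xs n \<in> BB" and l: "xs \<longlonglongrightarrow> l"
    have "xs n = B (xs n)" for n
    proof -
      obtain u where "xs n = B u" using xs unfolding BB_def by blast
      then show ?thesis by (simp add: BBu)
    qed
    then have "xs = (\<lambda>n. B (xs n))" by auto
    moreover have "(\<lambda>n. B (xs n)) \<longlonglongrightarrow> B l" by (rule bounded_linear.tendsto[OF blB l])
    ultimately have "xs \<longlonglongrightarrow> B l" by simp
    then have "l = B l" using l LIMSEQ_unique by blast
    then show "l \<in> BB" unfolding BB_def by blast
  qed
  define Y where "Y = orthogonal_comp BB"
  have sY: "subspace Y" and cY: "closed Y" unfolding Y_def by (auto simp: subspace_orthogonal_comp closed_oc)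
  have YY: "orthogonal_comp Y = BB" unfolding Y_def by (rule oc_oc[OF BBsub BBcl])
  have BBY: "v \<in> BB \<Longrightarrow> w \<in> Y \<Longrightarrow> v \<bullet> w = 0" for v w unfolding Y_def
    by (auto simp: orthogonal_comp_def orthogonal_def)
  have ST: "v \<in> S \<Longrightarrow> w \<in> T \<Longrightarrow> v \<bullet> w = 0" for v w unfolding T_def by (rule oc_orth[OF S])
  define cA where "cA = cos_sub A S"
  define sA where "sA = sin_sub A S"
  define c where "c = cos_sub (orthogonal_comp A) S"
  define sg where "sg = sin_sub (orthogonal_comp A) S"
  define cW where "cW = cos_sub (orthogonal_comp W) S"
  define sW where "sW = sin_sub W S"
  have cA0: "0 < cA"
  proof -
    have "1 / C \<le> cA" unfolding cA_def
    proof (rule cos_ge[OF nonzero_elem[OF A(1) Ane]])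
      fix v assume v: "v \<in> A" "v \<noteq> 0"
      have "norm v \<le> C * norm (orth_proj S v)" using C(2)[OF v(1)] unfolding P_def .
      then show "1 / C \<le> norm (orth_proj S v) / norm v" using v C(1) by (simp add: field_simps)
    qed
    then show ?thesis using C(1) by (meson divide_pos_pos order_less_le_trans zero_less_one)
  qed
  have sA0: "0 \<le> sA" unfolding sA_def by (rule sin_nonneg[OF nonzero_elem[OF A(1) Ane]])
  have c0: "0 \<le> c" unfolding c_def
    by (rule cos_nonneg[OF nonzero_elem[OF subspace_orthogonal_comp Apne]])
  have sg0: "0 < sg" unfolding sg_def using sig0 .
  have cW0: "0 \<le> cW" unfolding cW_def
    by (rule cos_nonneg[OF nonzero_elem[OF subspace_orthogonal_comp Wpne]])
  have sW0: "0 \<le> sW" unfolding sW_def by (rule sin_nonneg[OF nonzero_elem[OF W(1) Wne]])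
  define m where "m = lam * c / sg"
  define k where "k = lam * (sA / cA)"
  have m0: "0 \<le> m" unfolding m_def using lam c0 sg0 by simp
  have k0: "0 \<le> k" unfolding k_def using lam sA0 cA0 by simp
  have alpha: "\<alpha> = sqrt (1 + m^2) * cW" unfolding \<alpha>_def m_def c_def sg_def cW_def
    by (simp add: power_divide power_mult_distrib)
  have beta: "\<beta> = sqrt (1 + k^2) * sW" unfolding \<beta>_def k_def sA_def cA_def sW_def
    by (simp add: power_divide power_mult_distrib)
  show ?thesis
  proof
    fix x
    define z where "z = x - B x"
    have zT: "z \<in> T" by (rule Tchar) (simp add: z_def Plin PB)
    have Rz: "R x = orth_proj W z" unfolding R_def z_def by (simp add: proj_diff[OF W])
    define y where "y = orth_proj Y x"
    have goaly: "orth_proj (orthogonal_comp BB) x = y" unfolding y_def Y_def ..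
    have BxY: "orth_proj Y (B x) = 0"
      by (rule proj_zero[OF sY cY]) (unfold YY, auto simp: BB_def)
    have yz: "orth_proj Y z = y" unfolding z_def y_def proj_diff[OF sY cY] BxY by simp
    have yY: "y \<in> Y" unfolding y_def by (rule proj_in[OF sY cY])
    define b where "b = z - y"
    have bBB: "b \<in> BB" unfolding b_def using proj_perp[OF sY cY, of z] unfolding yz YY .
    then obtain u where bu: "b = B u" unfolding BB_def by blast
    define s' where "s' = P u"
    define a where "a = Q u"
    define d where "d = a - s'"
    have aA: "a \<in> A" unfolding a_def by (rule QA)
    have Pa: "P a = s'" unfolding a_def s'_def by (rule PQ)
    have s'S: "s' \<in> S" unfolding s'_def by (rule PS)
    have dT: "d \<in> T" unfolding d_def using Pp[of a] Pa by simp
    have bexp: "b = s' + lam *\<^sub>R d" unfolding bu Bdef d_def a_def s'_def by (simp add: algebra_simps)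
    define s0 where "s0 = P y"
    define p where "p = y - P y"
    have s0S: "s0 \<in> S" unfolding s0_def by (rule PS)
    have pT: "p \<in> T" unfolding p_def by (rule Pp)
    have yexp: "y = s0 + p" unfolding s0_def p_def by simp
    have Pb: "P b = s'" unfolding bexp Plin PSid[OF s'S] PT[OF dT] by simp
    have Pz: "P z = 0" using zT PT by blast
    have s0s': "s0 = - s'"
    proof -
      have "z = y + b" unfolding b_def by simp
      then have "P y + P b = 0" using Pz Plin by metis
      then show ?thesis unfolding s0_def Pb by (simp add: eq_neg_iff_add_eq_0)
    qed
    have yb: "y \<bullet> b = 0" using BBY[OF bBB yY] by (simp add: inner_commute)
    have i_s0d: "s0 \<bullet> d = 0" by (rule ST[OF s0S dT])
    have i_s0p: "s0 \<bullet> p = 0" by (rule ST[OF s0S pT])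
    have ny: "norm y^2 = norm s0^2 + norm p^2" unfolding yexp by (rule pyth2[OF i_s0p])
    have nb: "norm b^2 = norm s0^2 + (lam * norm d)^2"
    proof -
      have "s' \<bullet> (lam *\<^sub>R d) = 0" using ST[OF s'S dT] by simp
      from pyth2[OF this] show ?thesis unfolding bexp s0s' using lam by (simp add: power_mult_distrib)
    qed
    have nz: "norm z^2 = norm y^2 + norm b^2"
    proof -
      have "z = y + b" unfolding b_def by simp
      then show ?thesis using pyth2[OF yb] by simp
    qed
    have key: "norm s0^2 = lam * (p \<bullet> d)"
    proof -
      have "0 = (s0 + p) \<bullet> (- s0 + lam *\<^sub>R d)" using yb unfolding yexp bexp s0s' by simp
      also have "\<dots> = - (s0 \<bullet> s0) + lam * (s0 \<bullet> d) - p \<bullet> s0 + lam * (p \<bullet> d)"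
        by (simp add: inner_add_left inner_add_right inner_diff_left inner_diff_right distrib_left)
      also have "\<dots> = - (norm s0^2) + lam * (p \<bullet> d)"
        using i_s0d i_s0p by (simp add: inner_commute power2_norm_eq_inner)
      finally show ?thesis by simp
    qed
    have key2: "norm s0^2 \<le> norm p * (lam * norm d)"
    proof -
      have "p \<bullet> d \<le> norm p * norm d" by (rule norm_cauchy_schwarz)
      then have "lam * (p \<bullet> d) \<le> lam * (norm p * norm d)" using lam by (intro mult_left_mono) auto
      then show ?thesis using key by (simp add: algebra_simps)
    qed
    have dle: "lam * norm d \<le> k * norm s0"
    proof -
      have "norm d \<le> (sA / cA) * norm s0"
      proof (cases "a = 0")
        case True
        then have "d = 0" unfolding d_def using Pa Plin(2)[of 0 0] by auto
        then show ?thesis using sA0 cA0 by simp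
      next
        case False
        have "norm (orth_proj (orthogonal_comp S) a) / norm a \<le> sA" unfolding sA_def by (rule sin_ge[OF aA False])
        moreover have "orth_proj (orthogonal_comp S) a = d" unfolding proj_oc[OF S] d_def Pa[symmetric] P_def ..
        ultimately have d1: "norm d \<le> sA * norm a" using False by (simp add: divide_le_eq mult.commute)
        have "cA \<le> norm (orth_proj S a) / norm a" unfolding cA_def by (rule cos_le[OF aA False])
        then have a1: "cA * norm a \<le> norm s0" using False Pa unfolding P_def s0s' by (simp add: le_divide_eq)
        have "sA * norm a \<le> sA * (norm s0 / cA)" using a1 cA0 sA0 by (intro mult_left_mono) (auto simp: field_simps)
        with d1 show ?thesis by simp
      qed
      then have "lam * norm d \<le> lam * ((sA / cA) * norm s0)" using lam by (intro mult_left_mono) auto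
      then show ?thesis unfolding k_def by simp
    qed
    define v where "v = s0 + lam *\<^sub>R p"
    have vAp: "v \<in> orthogonal_comp A"
      unfolding orthogonal_comp_def orthogonal_def
    proof (clarify)
      fix a' assume a': "a' \<in> A"
      define u' where "u' = P a'"
      have u'S: "u' \<in> S" unfolding u'_def by (rule PS)
      have a'u'T: "a' - u' \<in> T" unfolding u'_def by (rule Pp)
      have Bu': "B u' = lam *\<^sub>R a' + (1 - lam) *\<^sub>R u'"
        unfolding Bdef u'_def QP QQ[OF a'] PP ..
      have "B u' \<bullet> y = 0" by (rule BBY) (auto simp: BB_def yY)
      moreover have z1: "u' \<bullet> p = 0" by (rule ST[OF u'S pT])
      moreover have z2: "s0 \<bullet> (a' - u') = 0" by (rule ST[OF s0S a'u'T])
      ultimately have e: "lam * (a' \<bullet> y) + (1 - lam) * (u' \<bullet> y) = 0"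
        unfolding Bu' by (simp add: inner_add_left)
      have ay: "a' \<bullet> y = u' \<bullet> s0 + (a' - u') \<bullet> p"
      proof -
        have "a' \<bullet> y = (u' + (a' - u')) \<bullet> (s0 + p)" unfolding yexp by simp
        also have "\<dots> = u' \<bullet> s0 + u' \<bullet> p + (a' - u') \<bullet> s0 + (a' - u') \<bullet> p"
          by (simp only: inner_add_left inner_add_right add.assoc)
        finally show ?thesis using z1 z2 by (simp add: inner_commute)
      qed
      have uy: "u' \<bullet> y = u' \<bullet> s0" unfolding yexp using z1 by (simp add: inner_add_right)
      have av: "a' \<bullet> v = u' \<bullet> s0 + lam * ((a' - u') \<bullet> p)"
      proof -
        have "a' \<bullet> v = (u' + (a' - u')) \<bullet> (s0 + lam *\<^sub>R p)" unfolding v_def by simp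
        also have "\<dots> = u' \<bullet> s0 + lam * (u' \<bullet> p) + (a' - u') \<bullet> s0 + lam * ((a' - u') \<bullet> p)"
          by (simp only: inner_add_left inner_add_right inner_scaleR_right) (simp add: algebra_simps)
        finally show ?thesis using z1 z2 by (simp add: inner_commute)
      qed
      have "lam * (u' \<bullet> s0 + (a' - u') \<bullet> p) + (1 - lam) * (u' \<bullet> s0) = 0" using e ay uy by simp
      then have "u' \<bullet> s0 + lam * ((a' - u') \<bullet> p) = 0" by (simp add: algebra_simps)
      then show "a' \<bullet> v = 0" using av by simp
    qed
    have Pv: "P v = s0" unfolding v_def Plin PSid[OF s0S] PT[OF pT] by simp
    have Ppv: "orth_proj (orthogonal_comp S) v = lam *\<^sub>R p"
      unfolding proj_oc[OF S] P_def[symmetric] Pv unfolding v_def by simp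
    have mle: "m * norm p \<le> norm s0"
    proof (cases "v = 0")
      case True
      have P0: "orth_proj S 0 = 0" using Plin(2)[of 0 0] unfolding P_def by simp
      have "lam *\<^sub>R p = 0" using Ppv True proj_oc[OF S, of 0] P0 by simp
      then have "lam * norm p = 0" by simp
      then have "m * norm p = 0" unfolding m_def by auto
      then show ?thesis by (metis norm_ge_zero)
    next
      case False
      have "c \<le> norm (orth_proj S v) / norm v" unfolding c_def by (rule cos_le[OF vAp False])
      then have cv: "c * norm v \<le> norm s0" using False Pv unfolding P_def by (simp add: le_divide_eq)
      have "norm (orth_proj (orthogonal_comp S) v) / norm v \<le> sg" unfolding sg_def by (rule sin_ge[OF vAp False])
      then have pv: "lam * norm p \<le> sg * norm v" using False Ppv lam by (simp add: divide_le_eq mult.commute)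
      have "m * norm p = c * (lam * norm p) / sg" unfolding m_def by simp
      also have "\<dots> \<le> c * (sg * norm v) / sg" using pv c0 sg0 by (intro divide_right_mono mult_left_mono) auto
      also have "\<dots> = c * norm v" using sg0 by simp
      finally show ?thesis using cv by linarith
    qed
    have low: "m^2 * (norm s0^2 + norm p^2) \<le> norm s0^2 + (lam * norm d)^2"
      by (rule alg_lower) (use m0 lam mle key2 in auto)
    have up: "norm s0^2 + (lam * norm d)^2 \<le> k^2 * (norm s0^2 + norm p^2)"
      by (rule alg_upper) (use k0 lam dle key2 in auto)
    have zlow: "(sqrt (1 + m^2) * norm y)^2 \<le> norm z^2"
    proof -
      have "(sqrt (1 + m^2) * norm y)^2 = norm y^2 + m^2 * norm y^2" by (simp add: power_mult_distrib algebra_simps)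
      moreover have "m^2 * norm y^2 \<le> norm b^2" using low unfolding ny nb .
      ultimately show ?thesis using nz by linarith
    qed
    have zup: "norm z^2 \<le> (sqrt (1 + k^2) * norm y)^2"
    proof -
      have "(sqrt (1 + k^2) * norm y)^2 = norm y^2 + k^2 * norm y^2" by (simp add: power_mult_distrib algebra_simps)
      moreover have "norm b^2 \<le> k^2 * norm y^2" using up unfolding ny nb .
      ultimately show ?thesis using nz by linarith
    qed
    have zl: "sqrt (1 + m^2) * norm y \<le> norm z" by (rule power2_le_imp_le[OF zlow]) simp
    have zu: "norm z \<le> sqrt (1 + k^2) * norm y" by (rule power2_le_imp_le[OF zup]) simp
    have WL: "cW * norm z \<le> norm (orth_proj W z)" unfolding cW_def
      by (rule W_lower[OF S W Wpne]) (use zT T_def in simp)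
    have WU: "norm (orth_proj W z) \<le> sW * norm z" unfolding sW_def
      by (rule W_upper[OF S W Wne]) (use zT T_def in simp)
    have "\<alpha> * norm y \<le> norm (R x)"
    proof -
      have "\<alpha> * norm y = cW * (sqrt (1 + m^2) * norm y)" unfolding alpha by simp
      also have "\<dots> \<le> cW * norm z" using zl cW0 by (rule mult_left_mono)
      also have "\<dots> \<le> norm (R x)" using WL Rz by simp
      finally show ?thesis .
    qed
    moreover have "norm (R x) \<le> \<beta> * norm y"
    proof -
      have "norm (R x) \<le> sW * norm z" using WU Rz by simp
      also have "\<dots> \<le> sW * (sqrt (1 + k^2) * norm y)" using zu sW0 by (rule mult_left_mono)
      also have "\<dots> = \<beta> * norm y" unfolding beta by simp
      finally show ?thesis .
    qed
    ultimately show "\<alpha> * norm (orth_proj (orthogonal_comp BB) x) \<le> norm (R x)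
           \<and> norm (R x) \<le> \<beta> * norm (orth_proj (orthogonal_comp BB) x)" unfolding goaly by simp
  qed
qed


end
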